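(* Let $c>0$. Suppose that for every $d$ that is a power of $2$ we are given a nonsingular $d\times d$ matrix $A=A_d$ with all entries in $\{+1,-1\}$ such that the matrix $B:=2^dA^{-1}$ is integral, has nonnegative row sums, and every entry of the first row of $B$ is nonnegative and has absolute value at least $(cd)^{d/2}$. Then there is a constant $c'>0$ (depending only on $c$) such that for every such $d$ and every integral vector $b\in\mathbb{Z}^d$ with $b>0$, the unique solution $z$ of $Az=b$ has first component satisfying $z_1>0$ and $|z_1|\ge (c'd)^{d/2}$.
   Context: For $x\in\mathbb{R}^n$, the notation $x>0$ means that all entries of $x$ are nonnegative and $x\neq 0$. (In the paper, a quantity $Q=Q(d)$ is called "large" if there is a constant $c>0$ with $|Q|\ge (cd)^{d/2}$ for all considered $d$; the hypotheses and conclusion above spell this out.) *)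

theory Defs
  imports "Jordan_Normal_Form.Gauss_Jordan_Elimination" "Jordan_Normal_Form.Determinant"
begin

definition is_pow2 :: "nat \<Rightarrow> bool" where
  "is_pow2 d \<longleftrightarrow> (\<exists>k. d = 2 ^ k)"

definition scaled_inv :: "nat \<Rightarrow> real mat \<Rightarrow> real mat" where
  "scaled_inv d A = (2 ^ d) \<cdot>\<^sub>m the (mat_inverse A)"

definition hyp_family :: "real \<Rightarrow> (nat \<Rightarrow> real mat) \<Rightarrow> bool" where
  "hyp_family c A \<longleftrightarrow> (\<forall>d. is_pow2 d \<longrightarrow>
     A d \<in> carrier_mat d d \<and> det (A d) \<noteq> 0 \<and>
     (\<forall>i<d. \<forall>j<d. A d $$ (i,j) = 1 \<or> A d $$ (i,j) = -1) \<and>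
     (let B = scaled_inv d (A d) in
        (\<forall>i<d. \<forall>j<d. B $$ (i,j) \<in> \<int>) \<and>
        (\<forall>i<d. (\<Sum>j<d. B $$ (i,j)) \<ge> 0) \<and>
        (\<forall>j<d. B $$ (0,j) \<ge> 0 \<and> \<bar>B $$ (0,j)\<bar> \<ge> (c * real d) powr (real d / 2))))"

end

theory Submission
  imports Defs
begin

theorem mainTheorem4:
  fixes c :: real
  assumes "c > 0"
  shows "\<exists>c'>0. \<forall>A. hyp_family c A \<longrightarrow>
    (\<forall>d b z. is_pow2 d \<longrightarrow> dim_vec b = d \<longrightarrow>
       (\<forall>i<d. b $ i \<in> \<int> \<and> b $ i \<ge> 0) \<longrightarrow> b \<noteq> 0\<^sub>v d \<longrightarrow>
       z \<in> carrier_vec d \<longrightarrow> A d *\<^sub>v z = b \<longrightarrow>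
       z $ 0 > 0 \<and> \<bar>z $ 0\<bar> \<ge> (c' * real d) powr (real d / 2))"
proof (intro exI[of _ "c/4"] conjI allI impI)
  show "c/4 > 0" using assms by simp
  fix A d b and z :: "real vec"
  assume H: "hyp_family c A" and p2: "is_pow2 d" and db: "dim_vec b = d"
    and bnn: "\<forall>i<d. b $ i \<in> \<int> \<and> b $ i \<ge> 0" and bnz: "b \<noteq> 0\<^sub>v d"
    and zc: "z \<in> carrier_vec d" and Az: "A d *\<^sub>v z = b"
  from p2 obtain k where dk: "d = 2^k" unfolding is_pow2_def by auto
  hence dpos: "d > 0" by simp
  from H p2 have Ac: "A d \<in> carrier_mat d d" and dA: "det (A d) \<noteq> 0"
    and Bh: "\<forall>j<d. scaled_inv d (A d) $$ (0,j) \<ge> 0 \<and>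
       \<bar>scaled_inv d (A d) $$ (0,j)\<bar> \<ge> (c * real d) powr (real d / 2)"
  proof -
    have "A d \<in> carrier_mat d d \<and> det (A d) \<noteq> 0 \<and> (\<forall>j<d. scaled_inv d (A d) $$ (0,j) \<ge> 0 \<and>
       \<bar>scaled_inv d (A d) $$ (0,j)\<bar> \<ge> (c * real d) powr (real d / 2))"
      using H p2 unfolding hyp_family_def Let_def by blast
    thus "A d \<in> carrier_mat d d" "det (A d) \<noteq> 0" "\<forall>j<d. scaled_inv d (A d) $$ (0,j) \<ge> 0 \<and>
       \<bar>scaled_inv d (A d) $$ (0,j)\<bar> \<ge> (c * real d) powr (real d / 2)" by auto
  qed
  have U: "A d \<in> Units (ring_mat TYPE(real) d undefined)"
    using det_non_zero_imp_unit[OF Ac dA] .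
  obtain M where Mi: "mat_inverse (A d) = Some M"
    using mat_inverse(1)[OF Ac, of undefined] U by (cases "mat_inverse (A d)") auto
  from mat_inverse(2)[OF Ac Mi] have MA: "M * A d = 1\<^sub>m d" and Mc: "M \<in> carrier_mat d d" by auto
  have zM: "z = M *\<^sub>v b"
  proof -
    have "M *\<^sub>v b = (M * A d) *\<^sub>v z" using Az assoc_mult_mat_vec[OF Mc Ac zc] by simp
    also have "\<dots> = z" using MA zc by simp
    finally show ?thesis by simp
  qed
  have Bj: "scaled_inv d (A d) $$ (0,j) = 2^d * M $$ (0,j)" if "j < d" for j
    unfolding scaled_inv_def using Mi Mc that dpos by simp
  have z0: "z $ 0 = (\<Sum>j<d. M $$ (0,j) * b $ j)"
    using zM Mc db dpos by (simp add: scalar_prod_def lessThan_atLeast0 mult.commute)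
  hence z0': "z $ 0 = (\<Sum>j<d. scaled_inv d (A d) $$ (0,j) * b $ j) / 2^d"
    by (simp add: Bj sum_divide_distrib)
  from bnz db obtain j0 where j0: "j0 < d" "b $ j0 \<noteq> 0"
    by (metis eq_vecI index_zero_vec(1) index_zero_vec(2))
  have bj0: "b $ j0 \<ge> 1"
  proof -
    from bnn j0 obtain m where "b $ j0 = of_int m" by (auto elim: Ints_cases)
    with bnn j0 show ?thesis by auto
  qed
  define L where "L = (c * real d) powr (real d / 2)"
  have Lpos: "L > 0" unfolding L_def using assms dpos by simp
  have "L \<le> scaled_inv d (A d) $$ (0,j0)" using Bh j0 unfolding L_def by auto
  also have "\<dots> \<le> scaled_inv d (A d) $$ (0,j0) * b $ j0"
    using bj0 Bh j0 by (metis mult_left_mono mult.right_neutral)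
  also have "\<dots> \<le> (\<Sum>j<d. scaled_inv d (A d) $$ (0,j) * b $ j)"
    by (rule member_le_sum) (use j0 Bh bnn in auto)
  finally have S: "L \<le> (\<Sum>j<d. scaled_inv d (A d) $$ (0,j) * b $ j)" .
  have L4: "(c/4 * real d) powr (real d / 2) = L / 2^d"
  proof -
    have "(c/4 * real d) powr (real d / 2) = (c * real d) powr (real d / 2) / 4 powr (real d / 2)"
      using assms by (simp add: powr_divide)
    also have "4 powr (real d / 2) = (2::real)^d"
    proof -
      have "(4::real) powr (real d / 2) = (2 powr 2) powr (real d / 2)" by simp
      also have "\<dots> = 2 powr (real d)" by (simp add: powr_powr)
      finally show ?thesis by (simp add: powr_realpow)
    qed
    finally show ?thesis unfolding L_def .
  qed
  have "L / 2^d \<le> z $ 0" using S z0' by (simp add: divide_right_mono)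
  moreover have "L / 2^d > 0" using Lpos by simp
  ultimately show "z $ 0 > 0" "\<bar>z $ 0\<bar> \<ge> (c/4 * real d) powr (real d / 2)" using L4 by auto
qed

end
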